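(* Let $k$ be an even positive integer, let $A,B$ be finite subsets of an abelian group, and let $C\subseteq A+B$. Let $\Gamma_C$ be the bipartite graph with vertex classes $A$ and $B$ (taken as disjoint copies) in which $a\in A$ and $b\in B$ are adjacent if and only if $a+b\in C$. Suppose that for every pair $(b,b')\in B\times B$ there are at least $w>0$ walks of length $k$ in $\Gamma_C$ from $b$ to $b'$. Then $|B-B|\le |C|^k/w$.
   Context: For subsets $X,Y$ of an abelian group, $X+Y=\{x+y:x\in X,y\in Y\}$ and $X-Y=\{x-y:x\in X,y\in Y\}$. A walk of length $k$ is a sequence of $k+1$ vertices with consecutive vertices adjacent. *)

theory Defs
  imports Complex_Main
begin

definition sumset :: "'a::ab_group_add set \<Rightarrow> 'a set \<Rightarrow> 'a set" where
  "sumset X Y = {x + y | x y. x \<in> X \<and> y \<in> Y}"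

definition diffset :: "'a::ab_group_add set \<Rightarrow> 'a set \<Rightarrow> 'a set" where
  "diffset X Y = {x - y | x y. x \<in> X \<and> y \<in> Y}"

text \<open>The bipartite graph Gamma_C: vertex classes are disjoint copies of A (tagged Inl)
  and B (tagged Inr); Inl a and Inr b are adjacent iff a + b is in C.\<close>
definition bip_adj :: "'a::ab_group_add set \<Rightarrow> 'a set \<Rightarrow> 'a set \<Rightarrow> 'a + 'a \<Rightarrow> 'a + 'a \<Rightarrow> bool" where
  "bip_adj A B C u v = (case (u, v) of
      (Inl a, Inr b) \<Rightarrow> a \<in> A \<and> b \<in> B \<and> a + b \<in> C
    | (Inr b, Inl a) \<Rightarrow> a \<in> A \<and> b \<in> B \<and> a + b \<in> C
    | _ \<Rightarrow> False)"

definition walks :: "('v \<Rightarrow> 'v \<Rightarrow> bool) \<Rightarrow> nat \<Rightarrow> 'v \<Rightarrow> 'v \<Rightarrow> 'v list set" where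
  "walks adj k u v = {p. length p = Suc k \<and> hd p = u \<and> last p = v \<and>
                        (\<forall>i<k. adj (p ! i) (p ! Suc i))}"

end

theory Submission
  imports Defs
begin

definition vl :: "'a + 'a \<Rightarrow> 'a" where "vl = case_sum id id"

lemma tele:
  fixes v :: "nat \<Rightarrow> 'a::ab_group_add"
  shows "(\<Sum>i<n. (if even i then v i + v (Suc i) else - (v i + v (Suc i))))
         = v 0 + (if even n then - v n else v n)"
  by (induction n) (auto simp: algebra_simps)

lemma adj_C:
  assumes "bip_adj A B C u v" shows "vl u + vl v \<in> C"
  using assms by (cases u; cases v) (auto simp: bip_adj_def vl_def add.commute)

lemma tags:
  assumes "p \<in> walks (bip_adj A B C) k (Inr b) v" "i \<le> k"
  shows "p ! i = (if even i then Inr (vl (p ! i)) else Inl (vl (p ! i)))"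
  using assms(2)
proof (induction i)
  case 0
  from assms(1) have "length p = Suc k" "hd p = Inr b" by (auto simp: walks_def)
  then have "p ! 0 = Inr b" by (metis hd_conv_nth list.size(3) nat.distinct(1))
  then show ?case by (simp add: vl_def)
next
  case (Suc i)
  then have i: "i < k" by simp
  with assms(1) have adj: "bip_adj A B C (p ! i) (p ! Suc i)" by (auto simp: walks_def)
  from Suc have IH: "p ! i = (if even i then Inr (vl (p ! i)) else Inl (vl (p ! i)))" by simp
  show ?case
  proof (cases "even i")
    case True
    with IH have "p ! i = Inr (vl (p ! i))" by simp
    with adj True show ?thesis
      by (cases "p ! Suc i") (simp_all add: bip_adj_def vl_def split: sum.splits)
  next
    case False
    with IH have "p ! i = Inl (vl (p ! i))" by simp
    with adj False show ?thesis
      by (cases "p ! Suc i") (simp_all add: bip_adj_def vl_def split: sum.splits)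
  qed
qed

definition FF :: "nat \<Rightarrow> ('a::ab_group_add + 'a) list \<Rightarrow> 'a list" where
  "FF k p = map (\<lambda>i. vl (p ! i) + vl (p ! Suc i)) [0..<k]"

definition alt :: "'a::ab_group_add list \<Rightarrow> 'a" where
  "alt xs = (\<Sum>i<length xs. if even i then xs ! i else - (xs ! i))"

lemma walk_len: "p \<in> walks adj k u v \<Longrightarrow> length p = Suc k"
  by (simp add: walks_def)

lemma walk_hd: "p \<in> walks adj k u v \<Longrightarrow> p ! 0 = u"
  by (cases p) (auto simp: walks_def)

lemma walk_last: assumes "p \<in> walks adj k u v" shows "p ! k = v"
proof -
  have l: "length p = Suc k" "last p = v" using assms by (auto simp: walks_def)
  then have "p \<noteq> []" by auto
  then have "last p = p ! (length p - 1)" by (rule last_conv_nth)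
  then show ?thesis using l by simp
qed

lemma FF_in: "p \<in> walks (bip_adj A B C) k u v \<Longrightarrow> FF k p \<in> {xs. set xs \<subseteq> C \<and> length xs = k}"
  by (auto simp: FF_def walks_def intro!: adj_C)

lemma alt_FF:
  assumes "p \<in> walks (bip_adj A B C) k (Inr b) (Inr b')" "even k"
  shows "alt (FF k p) = b - b'"
proof -
  have "alt (FF k p) = (\<Sum>i<k. (if even i then vl (p!i) + vl (p ! Suc i) else - (vl (p!i) + vl (p ! Suc i))))"
    unfolding alt_def FF_def by (intro sum.cong) auto
  also have "\<dots> = vl (p!0) - vl (p!k)" using tele[of "\<lambda>i. vl (p!i)" k] assms(2) by simp
  also have "\<dots> = b - b'" using walk_hd[OF assms(1)] walk_last[OF assms(1)] by (simp add: vl_def)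
  finally show ?thesis .
qed

lemma FF_inj:
  assumes p: "p \<in> walks (bip_adj A B C) k (Inr b) (Inr b1)"
    and q: "q \<in> walks (bip_adj A B C) k (Inr b) (Inr b2)"
    and eq: "FF k p = FF k q"
  shows "p = q"
proof -
  have "\<forall>i. i \<le> k \<longrightarrow> p ! i = q ! i"
  proof (intro allI)
    fix i show "i \<le> k \<longrightarrow> p ! i = q ! i"
    proof (induction i)
      case 0 show ?case using walk_hd[OF p] walk_hd[OF q] by simp
    next
      case (Suc i)
      show ?case
      proof
        assume si: "Suc i \<le> k"
        then have "p ! i = q ! i" using Suc by simp
        moreover have "FF k p ! i = FF k q ! i" using eq by simp
        ultimately have vq: "vl (p ! Suc i) = vl (q ! Suc i)" using si by (simp add: FF_def)
        have m: "(if even (Suc i) then Inr (vl (p ! Suc i)) else Inl (vl (p ! Suc i)))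
           = (if even (Suc i) then Inr (vl (q ! Suc i)) else Inl (vl (q ! Suc i)))" by (simp only: vq)
        show "p ! Suc i = q ! Suc i"
          using trans[OF trans[OF tags[OF p si] m] tags[OF q si, symmetric]] .
      qed
    qed
  qed
  note all = this
  show ?thesis
  proof (rule nth_equalityI)
    show "length p = length q" using walk_len[OF p] walk_len[OF q] by simp
    fix i assume "i < length p"
    then have "i \<le> k" using walk_len[OF p] by simp
    then show "p ! i = q ! i" using all by blast
  qed
qed

theorem lemma2p2:
  fixes A B C :: "'a::ab_group_add set" and k :: nat and w :: real
  assumes "even k" and "k > 0"
    and "finite A" and "finite B"
    and "C \<subseteq> sumset A B"
    and "w > 0"
    and "\<forall>b\<in>B. \<forall>b'\<in>B. real (card (walks (bip_adj A B C) k (Inr b) (Inr b'))) \<ge> w"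
  shows "real (card (diffset B B)) \<le> real (card C) ^ k / w"
proof -
  define D where "D = diffset B B"
  have "\<forall>d\<in>D. \<exists>x. fst x \<in> B \<and> snd x \<in> B \<and> d = fst x - snd x"
    unfolding D_def diffset_def by auto
  then obtain pr where pr: "\<And>d. d \<in> D \<Longrightarrow> fst (pr d) \<in> B \<and> snd (pr d) \<in> B \<and> d = fst (pr d) - snd (pr d)"
    by metis
  define W where "W d = walks (bip_adj A B C) k (Inr (fst (pr d))) (Inr (snd (pr d)))" for d
  define S where "S = {xs. set xs \<subseteq> C \<and> length xs = k}"
  have finS: "finite (sumset A B)" 
  proof -
    have "sumset A B = (\<lambda>(x,y). x+y) ` (A \<times> B)" by (auto simp: sumset_def)
    then show ?thesis using assms(3,4) by simp
  qed
  have finC: "finite C" using finS assms(5) finite_subset by blast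
  have finS2: "finite S" unfolding S_def using finite_lists_length_eq[OF finC] by simp
  have cardS: "card S = card C ^ k" unfolding S_def using card_lists_length_eq[OF finC] by simp
  have finD: "finite D" 
  proof -
    have "D = (\<lambda>(x,y). x-y) ` (B \<times> B)" by (auto simp: D_def diffset_def)
    then show ?thesis using assms(4) by simp
  qed
  have inj: "inj_on (\<lambda>(d,p). FF k p) (SIGMA d:D. W d)"
  proof (rule inj_onI, clarsimp)
    fix d p d' q assume d: "d \<in> D" and pW: "p \<in> W d" and d': "d' \<in> D" and qW: "q \<in> W d'"
      and e: "FF k p = FF k q"
    have "d = fst (pr d) - snd (pr d)" using pr[OF d] by blast
    also have "\<dots> = alt (FF k p)" using alt_FF[OF pW[unfolded W_def] assms(1)] by (rule sym)
    also have "\<dots> = alt (FF k q)" using e by (rule arg_cong)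
    also have "\<dots> = fst (pr d') - snd (pr d')" using alt_FF[OF qW[unfolded W_def] assms(1)] .
    also have "\<dots> = d'" using pr[OF d'] by (rule sym[OF conjunct2[OF conjunct2]])
    finally have "d = d'" .
    then show "d = d' \<and> p = q" using FF_inj[OF pW[unfolded W_def]] qW[unfolded W_def] e by auto
  qed
  have img: "(\<lambda>(d,p). FF k p) ` (SIGMA d:D. W d) \<subseteq> S"
  proof
    fix x assume "x \<in> (\<lambda>(d,p). FF k p) ` (SIGMA d:D. W d)"
    then obtain d p where "p \<in> W d" "x = FF k p" by auto
    then show "x \<in> S" unfolding S_def W_def using FF_in by simp
  qed
  have finW: "finite (W d)" if "d \<in> D" for d
  proof -
    have "inj_on (FF k) (W d)"
    proof (rule inj_onI)
      fix x y assume xy: "x \<in> W d" "y \<in> W d" "FF k x = FF k y"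
      have "(d,x) = (d,y)" by (rule inj_onD[OF inj]) (use xy that in auto)
      then show "x = y" by simp
    qed
    moreover have "FF k ` W d \<subseteq> S"
    proof (rule image_subsetI)
      fix p assume "p \<in> W d" then show "FF k p \<in> S" unfolding S_def W_def by (rule FF_in)
    qed
    then have "finite (FF k ` W d)" using finS2 by (rule finite_subset)
    ultimately show ?thesis by (rule finite_imageD[rotated])
  qed
  have c1: "card (SIGMA d:D. W d) \<le> card S" using card_inj_on_le[OF inj img finS2] .
  have c2: "card (SIGMA d:D. W d) = (\<Sum>d\<in>D. card (W d))"
    by (rule card_SigmaI[OF finD]) (use finW in blast)
  have "(\<Sum>d\<in>D. card (W d)) \<le> card C ^ k" using c1 c2 cardS by simp
  then have le: "(\<Sum>d\<in>D. real (card (W d))) \<le> real (card C) ^ k"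
    by (simp only: of_nat_sum[symmetric] of_nat_power[symmetric] of_nat_le_iff)
  have "real (card D) * w = (\<Sum>d\<in>D. w)" by simp
  also have "\<dots> \<le> (\<Sum>d\<in>D. real (card (W d)))"
  proof (rule sum_mono)
    fix d assume d: "d \<in> D"
    have "fst (pr d) \<in> B" "snd (pr d) \<in> B" using pr[OF d] by blast+
    then show "w \<le> real (card (W d))" unfolding W_def using assms(7) by blast
  qed
  finally have "real (card D) * w \<le> real (card C) ^ k" using le by linarith
  then show ?thesis unfolding D_def using assms(6) by (simp add: pos_le_divide_eq)
qed

end
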